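(* Let $H=(V,\mathcal E)$ be a finite hypergraph with nonnegative hyperedge weights $w_e$ and total weight $W=\sum_e w_e$. For $K\subseteq V$ let $W(K)=\sum_{e\in\mathcal E:\,e\subseteq K}w_e$, and for $\lambda\ge0$ let $\Phi(K,\lambda)=|K|-\lambda W(K)$. Let $\tau\in[0,1]$ and consider the linear program \[\min \sum_{v\in V}x_v \quad\text{s.t.}\quad z_e\le x_v\ \ \forall e\in\mathcal E,\ \forall v\in e;\qquad \sum_{e}w_e z_e\ge \tau W;\qquad 0\le x_v,z_e\le 1.\] Then there exist $\lambda^*\ge0$ and vertex sets $S^-\subseteq S^+\subseteq V$ such that (1) both $S^-$ and $S^+$ minimize $\Phi(\cdot,\lambda^* )$ over all subsets of $V$, and (2) there is $\alpha\in[0,1]$ such that $x^*=(1-\alpha)\mathbf 1_{S^-}+\alpha\mathbf 1_{S^+}$, together with $z^*_e=(1-\alpha)\mathbf 1[e\subseteq S^-]+\alpha\mathbf 1[e\subseteq S^+]$, is an optimal solution of the linear program satisfying the constraint $\sum_e w_e z^*_e\ge\tau W$.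
   Context: $\mathbf 1_S$ denotes the indicator vector of $S\subseteq V$. *)

theory Defs
  imports Main "HOL-Library.Indicator_Function"
begin

definition hyp_weight :: "'a set set \<Rightarrow> ('a set \<Rightarrow> real) \<Rightarrow> 'a set \<Rightarrow> real" where
  "hyp_weight E w K = (\<Sum>e\<in>{e\<in>E. e \<subseteq> K}. w e)"

definition Phi :: "'a set set \<Rightarrow> ('a set \<Rightarrow> real) \<Rightarrow> 'a set \<Rightarrow> real \<Rightarrow> real" where
  "Phi E w K lam = real (card K) - lam * hyp_weight E w K"

definition lp_feasible ::
  "'a set \<Rightarrow> 'a set set \<Rightarrow> ('a set \<Rightarrow> real) \<Rightarrow> real \<Rightarrow> ('a \<Rightarrow> real) \<Rightarrow> ('a set \<Rightarrow> real) \<Rightarrow> bool" where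
  "lp_feasible V E w \<tau> x z \<longleftrightarrow>
     (\<forall>e\<in>E. \<forall>v\<in>e. z e \<le> x v) \<and>
     (\<Sum>e\<in>E. w e * z e) \<ge> \<tau> * (\<Sum>e\<in>E. w e) \<and>
     (\<forall>v\<in>V. 0 \<le> x v \<and> x v \<le> 1) \<and>
     (\<forall>e\<in>E. 0 \<le> z e \<and> z e \<le> 1)"

definition lp_optimal ::
  "'a set \<Rightarrow> 'a set set \<Rightarrow> ('a set \<Rightarrow> real) \<Rightarrow> real \<Rightarrow> ('a \<Rightarrow> real) \<Rightarrow> ('a set \<Rightarrow> real) \<Rightarrow> bool" where
  "lp_optimal V E w \<tau> x z \<longleftrightarrow>
     lp_feasible V E w \<tau> x z \<and>
     (\<forall>x' z'. lp_feasible V E w \<tau> x' z' \<longrightarrow> (\<Sum>v\<in>V. x v) \<le> (\<Sum>v\<in>V. x' v))"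

end

theory Submission
  imports Defs "HOL-Analysis.Analysis"
begin

lemma ind_int:
  fixes a :: real assumes "0 \<le> a" "a \<le> 1"
  shows "((\<lambda>t::real. if t \<le> a then 1 else 0::real) has_integral a) {0..1}"
proof -
  have "((\<lambda>t::real. 1::real) has_integral a) (cbox 0 a)"
    using has_integral_const_real[of "1::real" 0 a] assms by simp
  then have "((\<lambda>t. if t \<in> cbox 0 a then 1 else 0::real) has_integral a) (cbox 0 1)"
    using has_integral_restrict_closed_subintervals_eq[of 0 a 0 1 "\<lambda>t. 1::real" a] assms by simp
  then have "((\<lambda>t. if t \<in> cbox 0 a then 1 else 0::real) has_integral a) {0..1}"
    by simp
  then show ?thesis
    by (rule has_integral_eq[rotated]) auto
qed

lemma hw_sum:
  assumes "finite E"
  shows "hyp_weight E w K = (\<Sum>e\<in>E. if e \<subseteq> K then w e else 0)"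
  unfolding hyp_weight_def using assms by (simp add: sum.inter_filter)

lemma hw_mono:
  assumes "finite E" "\<forall>e\<in>E. 0 \<le> w e" "K \<subseteq> K'"
  shows "hyp_weight E w K \<le> hyp_weight E w K'"
  unfolding hw_sum[OF assms(1)] using assms by (intro sum_mono) auto

lemma hw_super:
  assumes "finite E" "\<forall>e\<in>E. 0 \<le> w e"
  shows "hyp_weight E w A + hyp_weight E w B \<le> hyp_weight E w (A \<union> B) + hyp_weight E w (A \<inter> B)"
  unfolding hw_sum[OF assms(1)] sum.distrib[symmetric] using assms by (intro sum_mono) auto


lemma lagr:
  assumes fV: "finite V" and EV: "\<forall>e\<in>E. e \<subseteq> V" and w0: "\<forall>e\<in>E. 0 \<le> w e"
    and lam0: "0 \<le> lam" and mle: "\<forall>K\<subseteq>V. m \<le> Phi E w K lam"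
    and feas: "lp_feasible V E w \<tau> x z"
  shows "m \<le> (\<Sum>v\<in>V. x v) - lam * (\<Sum>e\<in>E. w e * z e)"
proof -
  have finE: "finite E" using EV fV by (meson Pow_iff finite_Pow_iff finite_subset subsetI)
  define mn where "mn e = Min (insert 1 (x ` e))" for e
  have fe: "finite e" if "e \<in> E" for e using EV fV that finite_subset by blast
  have mn_ge: "t \<le> mn e \<longleftrightarrow> (\<forall>v\<in>e. t \<le> x v)" if "e \<in> E" "t \<le> 1" for e t
    unfolding mn_def using fe[OF that(1)] that(2) by (simp add: Min_ge_iff)
  have x01: "\<forall>v\<in>V. 0 \<le> x v \<and> x v \<le> 1" and z01: "\<forall>e\<in>E. 0 \<le> z e \<and> z e \<le> 1"
    and zx: "\<forall>e\<in>E. \<forall>v\<in>e. z e \<le> x v"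
    using feas unfolding lp_feasible_def by auto
  have mn0: "0 \<le> mn e" if "e \<in> E" for e
    using mn_ge[OF that, of 0] x01 EV that by auto
  have mn1: "mn e \<le> 1" if "e \<in> E" for e
    unfolding mn_def using fe[OF that] by simp
  have zmn: "z e \<le> mn e" if "e \<in> E" for e
    using mn_ge[OF that, of "z e"] z01 zx that by auto
  have sle: "(\<Sum>e\<in>E. w e * z e) \<le> (\<Sum>e\<in>E. w e * mn e)"
    using zmn w0 by (intro sum_mono mult_left_mono) auto
  define h where "h t = (\<Sum>v\<in>V. if t \<le> x v then 1 else 0) - lam * (\<Sum>e\<in>E. w e * (if t \<le> mn e then 1 else 0))" for t :: real
  have hint: "(h has_integral ((\<Sum>v\<in>V. x v) - lam * (\<Sum>e\<in>E. w e * mn e))) {0..1}"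
    unfolding h_def
    apply (intro has_integral_diff has_integral_mult_right has_integral_sum fV finE)
     apply (rule ind_int) using x01 apply auto[2]
    apply (rule ind_int) using mn0 mn1 by auto
  have hge: "m \<le> h t" if "t \<in> {0..1}" for t
  proof -
    define L where "L = {v\<in>V. t \<le> x v}"
    have c: "(\<Sum>v\<in>V. if t \<le> x v then 1 else 0) = real (card L)"
      unfolding L_def using fV by (simp add: sum.If_cases Int_def)
    have "hyp_weight E w L = (\<Sum>e\<in>E. if e \<subseteq> L then w e else 0)" by (rule hw_sum[OF finE])
    also have "\<dots> = (\<Sum>e\<in>E. w e * (if t \<le> mn e then 1 else 0))"
    proof (rule sum.cong)
      fix e assume "e \<in> E"
      then have "e \<subseteq> L \<longleftrightarrow> t \<le> mn e" using mn_ge[of e t] that EV unfolding L_def by auto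
      then show "(if e \<subseteq> L then w e else 0) = w e * (if t \<le> mn e then 1 else 0)" by simp
    qed simp
    finally have "h t = Phi E w L lam" unfolding h_def Phi_def c by simp
    moreover have "L \<subseteq> V" unfolding L_def by auto
    ultimately show ?thesis using mle by auto
  qed
  have "((\<lambda>t::real. m) has_integral m) {0..1}" using has_integral_const_real[of m 0 1] by simp
  then have "m \<le> (\<Sum>v\<in>V. x v) - lam * (\<Sum>e\<in>E. w e * mn e)"
    using hint hge by (rule has_integral_le)
  moreover have "lam * (\<Sum>e\<in>E. w e * z e) \<le> lam * (\<Sum>e\<in>E. w e * mn e)"
    using sle lam0 by (rule mult_left_mono)
  ultimately show ?thesis by linarith
qed


lemma opt:
  assumes fV: "finite V" and EV: "\<forall>e\<in>E. e \<subseteq> V" and w0: "\<forall>e\<in>E. 0 \<le> w e"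
    and lam0: "0 \<le> lam" and mle: "\<forall>K\<subseteq>V. m \<le> Phi E w K lam"
    and SS: "Sm \<subseteq> Sp" "Sp \<subseteq> V"
    and pm: "Phi E w Sm lam = m" and pp: "Phi E w Sp lam = m"
    and a: "0 \<le> \<alpha>" "\<alpha> \<le> 1"
    and tw: "\<tau> * (\<Sum>e\<in>E. w e) \<le> (1 - \<alpha>) * hyp_weight E w Sm + \<alpha> * hyp_weight E w Sp"
    and eq: "lam = 0 \<or> (1 - \<alpha>) * hyp_weight E w Sm + \<alpha> * hyp_weight E w Sp = \<tau> * (\<Sum>e\<in>E. w e)"
  shows "lp_optimal V E w \<tau>
                (\<lambda>v. (1 - \<alpha>) * indicator Sm v + \<alpha> * indicator Sp v)
                (\<lambda>e. (1 - \<alpha>) * (if e \<subseteq> Sm then 1 else 0) + \<alpha> * (if e \<subseteq> Sp then 1 else 0))"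
proof -
  have finE: "finite E" using EV fV by (meson Pow_iff finite_Pow_iff finite_subset subsetI)
  let ?x = "\<lambda>v. (1 - \<alpha>) * indicator Sm v + \<alpha> * indicator Sp v"
  let ?z = "\<lambda>e. (1 - \<alpha>) * (if e \<subseteq> Sm then 1 else 0) + \<alpha> * (if e \<subseteq> Sp then 1 else 0::real)"
  have wz: "(\<Sum>e\<in>E. w e * ?z e) = (1 - \<alpha>) * hyp_weight E w Sm + \<alpha> * hyp_weight E w Sp"
    unfolding hw_sum[OF finE] sum_distrib_left sum.distrib[symmetric]
    by (rule sum.cong) (auto simp: algebra_simps)
  have sx: "(\<Sum>v\<in>V. ?x v) = (1 - \<alpha>) * card Sm + \<alpha> * card Sp"
  proof -
    have "(\<Sum>v\<in>V. ?x v) = (1 - \<alpha>) * (\<Sum>v\<in>V. indicator Sm v) + \<alpha> * (\<Sum>v\<in>V. indicator Sp v)"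
      by (simp add: sum.distrib sum_distrib_left)
    also have "\<dots> = (1 - \<alpha>) * card Sm + \<alpha> * card Sp"
    proof -
      have "(\<Sum>v\<in>V. indicator S v) = real (card S)" if "S \<subseteq> V" for S
        unfolding indicator_def using fV that by (simp add: sum.If_cases Int_absorb1)
      then show ?thesis using SS by auto
    qed
    finally show ?thesis .
  qed
  have feas: "lp_feasible V E w \<tau> ?x ?z"
    unfolding lp_feasible_def
  proof (intro conjI)
    show "\<forall>e\<in>E. \<forall>v\<in>e. ?z e \<le> ?x v"
      using a SS by (auto simp: indicator_def)
    show "\<tau> * (\<Sum>e\<in>E. w e) \<le> (\<Sum>e\<in>E. w e * ?z e)" using wz tw by simp
    show "\<forall>v\<in>V. 0 \<le> ?x v \<and> ?x v \<le> 1" using a by (auto simp: indicator_def)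
    show "\<forall>e\<in>E. 0 \<le> ?z e \<and> ?z e \<le> 1" using a by auto
  qed
  have val: "(\<Sum>v\<in>V. ?x v) = m + lam * ((1 - \<alpha>) * hyp_weight E w Sm + \<alpha> * hyp_weight E w Sp)"
    using pm pp unfolding sx Phi_def by (simp add: algebra_simps)
  show ?thesis unfolding lp_optimal_def
  proof (intro conjI feas allI impI)
    fix x' z' assume f': "lp_feasible V E w \<tau> x' z'"
    have l: "m \<le> (\<Sum>v\<in>V. x' v) - lam * (\<Sum>e\<in>E. w e * z' e)"
      by (rule lagr[OF fV EV w0 lam0 mle f'])
    have "\<tau> * (\<Sum>e\<in>E. w e) \<le> (\<Sum>e\<in>E. w e * z' e)" using f' unfolding lp_feasible_def by auto
    then have "lam * (\<tau> * (\<Sum>e\<in>E. w e)) \<le> lam * (\<Sum>e\<in>E. w e * z' e)"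
      using lam0 by (rule mult_left_mono)
    then show "(\<Sum>v\<in>V. ?x v) \<le> (\<Sum>v\<in>V. x' v)"
      using l eq unfolding val by auto
  qed
qed


theorem lemma4:
  fixes V :: "'a set" and E :: "'a set set" and w :: "'a set \<Rightarrow> real" and \<tau> :: real
  assumes "finite V"
    and "\<forall>e\<in>E. e \<subseteq> V"
    and "\<forall>e\<in>E. 0 \<le> w e"
    and "0 \<le> \<tau>" and "\<tau> \<le> 1"
  shows "\<exists>lam::real. \<exists>Sm Sp. 0 \<le> lam \<and> Sm \<subseteq> Sp \<and> Sp \<subseteq> V \<and>
           (\<forall>K\<subseteq>V. Phi E w Sm lam \<le> Phi E w K lam) \<and>
           (\<forall>K\<subseteq>V. Phi E w Sp lam \<le> Phi E w K lam) \<and>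
           (\<exists>\<alpha>::real. 0 \<le> \<alpha> \<and> \<alpha> \<le> 1 \<and>
              lp_optimal V E w \<tau>
                (\<lambda>v. (1 - \<alpha>) * indicator Sm v + \<alpha> * indicator Sp v)
                (\<lambda>e. (1 - \<alpha>) * (if e \<subseteq> Sm then 1 else 0) + \<alpha> * (if e \<subseteq> Sp then 1 else 0)))"
proof -
  note fV = assms(1) and EV = assms(2) and w0 = assms(3)
  have finE: "finite E" using EV fV by (meson Pow_iff finite_Pow_iff finite_subset subsetI)
  define Wt where "Wt K = hyp_weight E w K" for K
  define W where "W = (\<Sum>e\<in>E. w e)"
  have W0: "0 \<le> W" unfolding W_def using w0 by (simp add: sum_nonneg)
  have WV: "Wt V = W" unfolding Wt_def W_def hw_sum[OF finE] using EV by (intro sum.cong) auto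
  define A where "A = {K. K \<subseteq> V \<and> \<tau> * W \<le> Wt K}"
  define B where "B = {K. K \<subseteq> V \<and> Wt K < \<tau> * W}"
  have finA: "finite A" and finB: "finite B" unfolding A_def B_def using fV by auto
  have VA: "V \<in> A" unfolding A_def using WV W0 assms(5) mult_left_le_one_le[of W \<tau>] assms(4) by simp
  define c where "c K K' = (real (card K) - real (card K')) / (Wt K - Wt K')" for K K'
  define r where "r K = Max ((\<lambda>K'. c K K') ` B)" for K
  define lam where "lam = (if B = {} then 0 else max 0 (Min (r ` A)))"
  have lam0: "0 \<le> lam" unfolding lam_def by auto
  define m where "m = Min ((\<lambda>K. Phi E w K lam) ` Pow V)"
  have mle: "\<forall>K\<subseteq>V. m \<le> Phi E w K lam" unfolding m_def using fV by auto
  obtain G where G: "G \<subseteq> V" "Phi E w G lam = m"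
  proof -
    have "m \<in> (\<lambda>K. Phi E w K lam) ` Pow V" unfolding m_def using fV by (intro Min_in) auto
    then show ?thesis using that by auto
  qed
  have key: "Phi E w K lam \<le> Phi E w K' lam"
    if "K \<in> A" "K' \<in> B" "c K K' \<le> lam" for K K'
  proof -
    have "Wt K' < Wt K" using that unfolding A_def B_def by auto
    then have "real (card K) - real (card K') \<le> lam * (Wt K - Wt K')"
      using that(3) unfolding c_def by (simp add: divide_le_eq)
    then show ?thesis unfolding Phi_def Wt_def by (simp add: algebra_simps)
  qed
  obtain KA where KA: "KA \<in> A" "Phi E w KA lam = m"
  proof (cases "G \<in> A")
    case True then show ?thesis using that G by auto
  next
    case False
    then have GB: "G \<in> B" using G unfolding A_def B_def by auto
    then have Bne: "B \<noteq> {}" by auto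
    have "Min (r ` A) \<in> r ` A" using finA VA by (intro Min_in) auto
    then obtain K0 where K0: "K0 \<in> A" "r K0 = Min (r ` A)" by auto
    have "lam \<ge> r K0" unfolding lam_def using Bne K0 by auto
    moreover have "c K0 G \<le> r K0" unfolding r_def using finB GB by (intro Max_ge) auto
    ultimately have "Phi E w K0 lam \<le> m" using key[OF K0(1) GB] G by auto
    moreover have "m \<le> Phi E w K0 lam" using mle K0 unfolding A_def by auto
    ultimately show ?thesis using that K0 by auto
  qed
  have KAV: "KA \<subseteq> V" using KA unfolding A_def by auto
  show ?thesis
  proof (cases "\<exists>KB\<in>B. Phi E w KB lam = m")
    case True
    then obtain KB where KB: "KB \<in> B" "Phi E w KB lam = m" by auto
    have KBV: "KB \<subseteq> V" using KB unfolding B_def by auto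
    define Sm where "Sm = KA \<inter> KB"
    define Sp where "Sp = KA \<union> KB"
    have SS: "Sm \<subseteq> Sp" "Sp \<subseteq> V" unfolding Sm_def Sp_def using KAV KBV by auto
    have fin: "finite KA" "finite KB" using KAV KBV fV finite_subset by auto
    have cc: "card Sp + card Sm = card KA + card KB"
      unfolding Sm_def Sp_def using card_Un_Int[OF fin] by simp
    have ww: "Wt KA + Wt KB \<le> Wt Sp + Wt Sm"
      unfolding Wt_def Sp_def Sm_def by (rule hw_super[OF finE w0])
    have "Phi E w Sp lam + Phi E w Sm lam \<le> Phi E w KA lam + Phi E w KB lam"
    proof -
      have "lam * (Wt KA + Wt KB) \<le> lam * (Wt Sp + Wt Sm)" using ww lam0 by (rule mult_left_mono)
      moreover have "real (card Sp) + real (card Sm) = real (card KA) + real (card KB)"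
        using cc by (metis of_nat_add)
      ultimately show ?thesis unfolding Phi_def Wt_def by (simp add: algebra_simps)
    qed
    moreover have "m \<le> Phi E w Sp lam" "m \<le> Phi E w Sm lam" using mle SS by auto
    ultimately have pp: "Phi E w Sp lam = m" and pm: "Phi E w Sm lam = m" using KA KB by auto
    have hp: "\<tau> * W \<le> Wt Sp"
      using hw_mono[OF finE w0, of KA Sp] KA unfolding Sp_def A_def Wt_def by auto
    have hm: "Wt Sm < \<tau> * W"
      using hw_mono[OF finE w0, of Sm KB] KB unfolding Sm_def B_def Wt_def by auto
    define \<alpha> where "\<alpha> = (\<tau> * W - Wt Sm) / (Wt Sp - Wt Sm)"
    have d: "Wt Sp - Wt Sm > 0" using hp hm by linarith
    have a0: "0 \<le> \<alpha>" unfolding \<alpha>_def using hm d by simp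
    have a1: "\<alpha> \<le> 1" unfolding \<alpha>_def using hp d by simp
    have aeq: "(1 - \<alpha>) * Wt Sm + \<alpha> * Wt Sp = \<tau> * W"
    proof -
      have "\<alpha> * (Wt Sp - Wt Sm) = \<tau> * W - Wt Sm" unfolding \<alpha>_def using d by simp
      then show ?thesis by (simp add: algebra_simps)
    qed
    have "lp_optimal V E w \<tau>
                (\<lambda>v. (1 - \<alpha>) * indicator Sm v + \<alpha> * indicator Sp v)
                (\<lambda>e. (1 - \<alpha>) * (if e \<subseteq> Sm then 1 else 0) + \<alpha> * (if e \<subseteq> Sp then 1 else 0))"
      by (rule opt[OF fV EV w0 lam0 mle SS pm pp a0 a1]) (use aeq in \<open>auto simp: Wt_def W_def\<close>)
    then have ex: "\<exists>\<alpha>::real. 0 \<le> \<alpha> \<and> \<alpha> \<le> 1 \<and> lp_optimal V E w \<tau>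
                (\<lambda>v. (1 - \<alpha>) * indicator Sm v + \<alpha> * indicator Sp v)
                (\<lambda>e. (1 - \<alpha>) * (if e \<subseteq> Sm then 1 else 0) + \<alpha> * (if e \<subseteq> Sp then 1 else 0))"
      using a0 a1 by blast
    have m1: "\<forall>K\<subseteq>V. Phi E w Sm lam \<le> Phi E w K lam" using pm mle by auto
    have m2: "\<forall>K\<subseteq>V. Phi E w Sp lam \<le> Phi E w K lam" using pp mle by auto
    show ?thesis using ex m1 m2 lam0 SS by blast
  next
    case False
    have l0: "lam = 0"
    proof (rule ccontr)
      assume "lam \<noteq> 0"
      then have Bne: "B \<noteq> {}" and lamM: "lam = Min (r ` A)" and lp: "lam > 0"
        unfolding lam_def by (auto split: if_splits)
      have "c KA K' < lam" if "K' \<in> B" for K'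
      proof -
        have "m < Phi E w K' lam" using False mle that unfolding B_def
          by (metis (mono_tags, lifting) mem_Collect_eq order_le_less)
        then have "real (card KA) - real (card K') < lam * (Wt KA - Wt K')"
          using KA unfolding Phi_def Wt_def by (simp add: algebra_simps)
        moreover have "Wt K' < Wt KA" using that KA unfolding A_def B_def by auto
        ultimately show ?thesis unfolding c_def by (simp add: divide_less_eq)
      qed
      then have "r KA < lam" unfolding r_def using finB Bne by (subst Max_less_iff) auto
      moreover have "lam \<le> r KA" unfolding lamM using finA KA by auto
      ultimately show False by simp
    qed
    have "lp_optimal V E w \<tau>
                (\<lambda>v. (1 - 0) * indicator KA v + 0 * indicator KA v)
                (\<lambda>e. (1 - 0) * (if e \<subseteq> KA then 1 else 0) + 0 * (if e \<subseteq> KA then 1 else 0))"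
      by (rule opt[OF fV EV w0 lam0 mle _ KAV KA(2) KA(2)]) (use KA l0 in \<open>auto simp: A_def Wt_def W_def\<close>)
    then have ex: "\<exists>\<alpha>::real. 0 \<le> \<alpha> \<and> \<alpha> \<le> 1 \<and> lp_optimal V E w \<tau>
                (\<lambda>v. (1 - \<alpha>) * indicator KA v + \<alpha> * indicator KA v)
                (\<lambda>e. (1 - \<alpha>) * (if e \<subseteq> KA then 1 else 0) + \<alpha> * (if e \<subseteq> KA then 1 else 0))"
      by (intro exI[of _ 0]) simp
    have m1: "\<forall>K\<subseteq>V. Phi E w KA lam \<le> Phi E w K lam" using KA mle by auto
    show ?thesis using ex m1 lam0 KAV by blast
  qed
qed

end
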